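(* There is no exhaustive strategy-proof PB algorithm $G$ and constant $\alpha>\frac{2}{3}$ such that $\min_{i\in N}u_i(G(I))\ge\alpha\cdot OPT(I)$ for every PB instance $I$ in which every project has cost $1$ and every approval vote is a knapsack vote (i.e., $c(A_i)\le b$ for all $i$). Here $OPT(I)=\max_{S\subseteq P,\,c(S)\le b}\min_{i\in N}u_i(S)$.
   Context: A PB instance is $I=\langle N,P,c,b,\mathcal{A}\rangle$ with voters $N=\{1,\dots,n\}$, projects $P$, costs $c:P\to\mathbb{N}$, budget $b\in\mathbb{N}$, and approval sets $A_i\subseteq P$. $c(S)=\sum_{p\in S}c(p)$; $S$ is feasible if $c(S)\le b$; $u_i(S)=c(S\cap A_i)$. A PB algorithm $G$ maps every instance to a single feasible set $G(I)$. $G$ is strategy-proof if for every instance, every voter $i$ and every $S\subseteq P$, $c(A_i\cap G(A_i,\mathcal{A}_{-i}))\ge c(A_i\cap G(S,\mathcal{A}_{-i}))$, where $(S,\mathcal{A}_{-i})$ denotes the profile obtained by replacing $A_i$ with $S$ and keeping all other votes and $N,P,c,b$ fixed. $G$ is exhaustive if for every instance $I$ and every $p\notin G(I)$, $c(p)+c(G(I))>b$. *)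

theory Defs
  imports Complex_Main
begin

text \<open>Voters are 1..n, projects are a finite set of natural numbers
(project names are irrelevant). To avoid junk data, costs outside P are 0 and
votes of non-voters are empty (canonical representation).\<close>

record pb_inst =
  voters :: nat
  projs  :: "nat set"
  cost   :: "nat \<Rightarrow> nat"
  budget :: nat
  votes  :: "nat \<Rightarrow> nat set"

definition setcost :: "pb_inst \<Rightarrow> nat set \<Rightarrow> nat" where
  "setcost I S = (\<Sum>p\<in>S. cost I p)"

definition utility :: "pb_inst \<Rightarrow> nat \<Rightarrow> nat set \<Rightarrow> nat" where
  "utility I i S = setcost I (S \<inter> votes I i)"

definition valid_inst :: "pb_inst \<Rightarrow> bool" where
  "valid_inst I \<longleftrightarrow> voters I \<ge> 1 \<and> finite (projs I)
     \<and> (\<forall>i\<in>{1..voters I}. votes I i \<subseteq> projs I)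
     \<and> (\<forall>i. i \<notin> {1..voters I} \<longrightarrow> votes I i = {})
     \<and> (\<forall>p. p \<notin> projs I \<longrightarrow> cost I p = 0)"

definition feasible :: "pb_inst \<Rightarrow> nat set \<Rightarrow> bool" where
  "feasible I S \<longleftrightarrow> S \<subseteq> projs I \<and> setcost I S \<le> budget I"

definition pb_algorithm :: "(pb_inst \<Rightarrow> nat set) \<Rightarrow> bool" where
  "pb_algorithm G \<longleftrightarrow> (\<forall>I. valid_inst I \<longrightarrow> feasible I (G I))"

definition strategy_proof :: "(pb_inst \<Rightarrow> nat set) \<Rightarrow> bool" where
  "strategy_proof G \<longleftrightarrow>
     (\<forall>I. valid_inst I \<longrightarrow> (\<forall>i\<in>{1..voters I}. \<forall>S. S \<subseteq> projs I \<longrightarrow>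
        setcost I (votes I i \<inter> G I)
          \<ge> setcost I (votes I i \<inter> G (I\<lparr>votes := (votes I)(i := S)\<rparr>))))"

definition exhaustive :: "(pb_inst \<Rightarrow> nat set) \<Rightarrow> bool" where
  "exhaustive G \<longleftrightarrow>
     (\<forall>I. valid_inst I \<longrightarrow> (\<forall>p\<in>projs I. p \<notin> G I \<longrightarrow> cost I p + setcost I (G I) > budget I))"

definition min_util :: "pb_inst \<Rightarrow> nat set \<Rightarrow> nat" where
  "min_util I S = Min ((\<lambda>i. utility I i S) ` {1..voters I})"

definition OPT :: "pb_inst \<Rightarrow> nat" where
  "OPT I = Max ((\<lambda>S. min_util I S) ` {S. feasible I S})"

definition unit_cost :: "pb_inst \<Rightarrow> bool" where
  "unit_cost I \<longleftrightarrow> (\<forall>p\<in>projs I. cost I p = 1)"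

definition knapsack_votes :: "pb_inst \<Rightarrow> bool" where
  "knapsack_votes I \<longleftrightarrow> (\<forall>i\<in>{1..voters I}. setcost I (votes I i) \<le> budget I)"

end

theory Submission
  imports Defs
begin

lemma finite_feasible: "valid_inst I \<Longrightarrow> finite {S. feasible I S}"
  unfolding valid_inst_def feasible_def
  by (rule finite_subset[of _ "Pow (projs I)"]) auto

lemma min_util_ge1:
  assumes "valid_inst I" "\<forall>i\<in>{1..voters I}. utility I i S \<ge> 1"
  shows "min_util I S \<ge> 1"
proof -
  have "{1..voters I} \<noteq> {}" using assms(1) by (auto simp: valid_inst_def)
  then show ?thesis unfolding min_util_def using assms(2) by (simp add: Min_ge_iff)
qed

lemma OPT_ge1:
  assumes "valid_inst I" "feasible I S" "\<forall>i\<in>{1..voters I}. utility I i S \<ge> 1"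
  shows "OPT I \<ge> 1"
proof -
  have "min_util I S \<le> OPT I" unfolding OPT_def
    using finite_feasible[OF assms(1)] assms(2) by (intro Max_ge) auto
  with min_util_ge1[OF assms(1,3)] show ?thesis by simp
qed

lemma util_from_min:
  assumes "valid_inst I" "min_util I W \<ge> 1" "i \<in> {1..voters I}"
  shows "utility I i W \<ge> 1"
proof -
  have "min_util I W \<le> utility I i W" unfolding min_util_def
    using assms(3) by (intro Min_le) auto
  with assms(2) show ?thesis by simp
qed

lemma good:
  assumes a: "\<alpha> > 2/3" and pb: "pb_algorithm G"
    and ap: "\<forall>I. valid_inst I \<and> unit_cost I \<and> knapsack_votes I \<longrightarrow>
                 real (min_util I (G I)) \<ge> \<alpha> * real (OPT I)"
    and v: "valid_inst I" "unit_cost I" "knapsack_votes I"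
    and f: "feasible I S" "\<forall>i\<in>{1..voters I}. utility I i S \<ge> 1"
  shows "feasible I (G I) \<and> (\<forall>i\<in>{1..voters I}. utility I i (G I) \<ge> 1)"
proof -
  have o: "real (OPT I) \<ge> 1" using OPT_ge1[OF v(1) f] by simp
  have "real (min_util I (G I)) \<ge> \<alpha> * real (OPT I)" using ap v by blast
  moreover have "\<alpha> * real (OPT I) > 0" using a o by simp
  ultimately have "min_util I (G I) \<ge> 1" by linarith
  then show ?thesis using util_from_min[OF v(1)] pb v(1) unfolding pb_algorithm_def by blast
qed

definition I0 :: pb_inst where
  "I0 = \<lparr>voters = 3, projs = {0,1,2}, cost = (\<lambda>p. if p \<le> 2 then 1 else 0), budget = 2,
         votes = (\<lambda>i. if i = 1 then {0} else if i = 2 then {0,1} else if i = 3 then {0,2} else {})\<rparr>"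

definition I1 :: pb_inst where "I1 = I0\<lparr>votes := (votes I0)(3 := {2})\<rparr>"
definition I2 :: pb_inst where "I2 = I0\<lparr>votes := (votes I0)(2 := {1})\<rparr>"

lemma sub3: "W \<subseteq> {0,1,2::nat} \<Longrightarrow> W \<in> Pow {0,1,2}" by simp

lemma pow3: "Pow {0,1,2::nat} = {{},{0},{1},{2},{0,1},{0,2},{1,2},{0,1,2}}"
  by (simp add: Pow_insert insert_commute)

lemma setcost0: "S \<subseteq> {0,1,2} \<Longrightarrow> setcost I0 S = card S"
  unfolding setcost_def I0_def
  by (subst card_eq_sum, rule sum.cong) auto

lemma I0_props: "valid_inst I0" "unit_cost I0" "knapsack_votes I0"
  by (auto simp: valid_inst_def unit_cost_def knapsack_votes_def I0_def setcost_def)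
lemma I1_props: "valid_inst I1" "unit_cost I1" "knapsack_votes I1"
  by (auto simp: valid_inst_def unit_cost_def knapsack_votes_def I1_def I0_def setcost_def)
lemma I2_props: "valid_inst I2" "unit_cost I2" "knapsack_votes I2"
  by (auto simp: valid_inst_def unit_cost_def knapsack_votes_def I2_def I0_def setcost_def)

lemma single_in: "1 \<le> utility I i W \<Longrightarrow> votes I i = {x} \<Longrightarrow> x \<in> W"
  by (cases "x \<in> W") (auto simp: utility_def setcost_def)

theorem theorem5:
  shows "\<not> (\<exists>(G :: pb_inst \<Rightarrow> nat set) (\<alpha> :: real).
            \<alpha> > 2/3 \<and> pb_algorithm G \<and> exhaustive G \<and> strategy_proof G \<and>
            (\<forall>I. valid_inst I \<and> unit_cost I \<and> knapsack_votes I \<longrightarrow>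
                 real (min_util I (G I)) \<ge> \<alpha> * real (OPT I)))"
proof
  assume "\<exists>(G :: pb_inst \<Rightarrow> nat set) (\<alpha> :: real).
            \<alpha> > 2/3 \<and> pb_algorithm G \<and> exhaustive G \<and> strategy_proof G \<and>
            (\<forall>I. valid_inst I \<and> unit_cost I \<and> knapsack_votes I \<longrightarrow>
                 real (min_util I (G I)) \<ge> \<alpha> * real (OPT I))"
  then obtain G and \<alpha> :: real where a: "\<alpha> > 2/3" and pb: "pb_algorithm G" and ex: "exhaustive G"
    and sp: "strategy_proof G"
    and ap: "\<forall>I. valid_inst I \<and> unit_cost I \<and> knapsack_votes I \<longrightarrow>
                 real (min_util I (G I)) \<ge> \<alpha> * real (OPT I)" by blast
  note gd = good[OF a pb ap]
  have g0: "feasible I0 (G I0) \<and> (\<forall>i\<in>{1..voters I0}. utility I0 i (G I0) \<ge> 1)"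
    by (rule gd[OF I0_props, of "{0,1}"]) (auto simp: feasible_def utility_def setcost_def I0_def)
  have g1: "feasible I1 (G I1) \<and> (\<forall>i\<in>{1..voters I1}. utility I1 i (G I1) \<ge> 1)"
    by (rule gd[OF I1_props, of "{0,2}"]) (auto simp: feasible_def utility_def setcost_def I1_def I0_def)
  have g2: "feasible I2 (G I2) \<and> (\<forall>i\<in>{1..voters I2}. utility I2 i (G I2) \<ge> 1)"
    by (rule gd[OF I2_props, of "{0,1}"]) (auto simp: feasible_def utility_def setcost_def I2_def I0_def)
  have ex0: "\<forall>p\<in>projs I0. p \<notin> G I0 \<longrightarrow> cost I0 p + setcost I0 (G I0) > budget I0"
    using ex I0_props(1) unfolding exhaustive_def by blast
  have sp1: "setcost I0 (votes I0 3 \<inter> G I0) \<ge> setcost I0 (votes I0 3 \<inter> G I1)"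
  proof -
    have h: "3 \<in> {1..voters I0}" "{2} \<subseteq> projs I0" by (auto simp: I0_def)
    have "\<forall>I. valid_inst I \<longrightarrow> (\<forall>i\<in>{1..voters I}. \<forall>S. S \<subseteq> projs I \<longrightarrow>
        setcost I (votes I i \<inter> G I)
          \<ge> setcost I (votes I i \<inter> G (I\<lparr>votes := (votes I)(i := S)\<rparr>)))"
      using sp unfolding strategy_proof_def .
    then have "\<forall>i\<in>{1..voters I0}. \<forall>S. S \<subseteq> projs I0 \<longrightarrow>
        setcost I0 (votes I0 i \<inter> G I0)
          \<ge> setcost I0 (votes I0 i \<inter> G (I0\<lparr>votes := (votes I0)(i := S)\<rparr>))"
      using I0_props(1) by blast
    then show ?thesis using h unfolding I1_def by blast
  qed
  have sp2: "setcost I0 (votes I0 2 \<inter> G I0) \<ge> setcost I0 (votes I0 2 \<inter> G I2)"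
  proof -
    have h: "2 \<in> {1..voters I0}" "{1} \<subseteq> projs I0" by (auto simp: I0_def)
    have "\<forall>I. valid_inst I \<longrightarrow> (\<forall>i\<in>{1..voters I}. \<forall>S. S \<subseteq> projs I \<longrightarrow>
        setcost I (votes I i \<inter> G I)
          \<ge> setcost I (votes I i \<inter> G (I\<lparr>votes := (votes I)(i := S)\<rparr>)))"
      using sp unfolding strategy_proof_def .
    then have "\<forall>i\<in>{1..voters I0}. \<forall>S. S \<subseteq> projs I0 \<longrightarrow>
        setcost I0 (votes I0 i \<inter> G I0)
          \<ge> setcost I0 (votes I0 i \<inter> G (I0\<lparr>votes := (votes I0)(i := S)\<rparr>))"
      using I0_props(1) by blast
    then show ?thesis using h unfolding I2_def by blast
  qed
  have c1: "{0,2} \<inter> G I1 = {0,2}"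
  proof -
    have "utility I1 1 (G I1) \<ge> 1" "utility I1 3 (G I1) \<ge> 1" using g1 by (auto simp: I1_def I0_def)
    then have "0 \<in> G I1" "2 \<in> G I1"
      by (auto intro: single_in simp: I1_def I0_def)
    then show ?thesis by auto
  qed
  have c2: "{0,1} \<inter> G I2 = {0,1}"
  proof -
    have "utility I2 1 (G I2) \<ge> 1" "utility I2 2 (G I2) \<ge> 1" using g2 by (auto simp: I2_def I0_def)
    then have "0 \<in> G I2" "1 \<in> G I2"
      by (auto intro: single_in simp: I2_def I0_def)
    then show ?thesis by auto
  qed
  have v2: "votes I0 2 = {0,1}" and v3: "votes I0 3 = {0,2}" by (auto simp: I0_def)
  have s1: "setcost I0 (votes I0 3 \<inter> G I0) \<ge> 2" using sp1 c1 v3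
    by (simp add: setcost_def I0_def)
  have s2: "setcost I0 (votes I0 2 \<inter> G I0) \<ge> 2" using sp2 c2 v2
    by (simp add: setcost_def I0_def)
  have "G I0 \<in> Pow {0,1,2}" using g0 by (auto simp: feasible_def I0_def)
  then show False
    unfolding pow3 using g0 ex0 s1 s2 v2 v3
    by (auto simp: feasible_def utility_def setcost_def I0_def)
qed

end
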